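(* Let $\mathcal{X}$ be an arbitrary (unknown) distribution over passwords and let $pwd^1,\ldots,pwd^N$ be $N$ independent samples from $\mathcal{X}$ (the users' passwords). Let $pwd_1,pwd_2,\ldots$ be the distinct passwords appearing in the sample, with $f_i$ the number of samples equal to $pwd_i$, sorted so that $f_i\ge f_{i+1}$. Let $k>0$ be the cost of one password guess, $V>0$ the value of a cracked password, $L>0$, and $j\ge 1$ an integer. If $\frac{V}{k}\ge NL$ and $a=1$, then a rational adversary will crack at least \[ \sum_{i: f_i\geq j} f_i - \frac{N}{(j-1)!\,L^{j-1}} \] of the $N$ user passwords, in expectation (over the draw of the $N$ samples).
   Context: Attacker model: an offline attacker who knows the true distribution $\mathcal{X}$ (but not which password a given user chose) guesses passwords in decreasing order of true probability $q_1\ge q_2\ge\cdots$, each guess costing $k$. For threshold $t$ (guessing the $t$ most likely passwords) the expected reward is $R(t)=V\,(\sum_{m=1}^t q_m)^a$ with $a=1$ here (no diminishing returns), and the marginal cost of the $t$-th guess is $MC(t)=k(1-\sum_{m=1}^{t-1}q_m)$; the marginal revenue is $MR(t)=V q_t$. A rational adversary continues guessing as long as marginal revenue is at least marginal cost and stops otherwise. A user password is cracked if it is among the attacker's guesses. *)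

theory Defs
  imports "HOL-Probability.Probability" "HOL-Probability.Product_PMF"
begin

text \<open>Attacker model with a = 1. The guessing order is g :: nat => 'a (0-indexed):
  g 0 is the first guess, g t the (t+1)-th guess, with q_(t+1) = pmf p (g t).\<close>

definition marginal_revenue :: "real \<Rightarrow> 'a pmf \<Rightarrow> (nat \<Rightarrow> 'a) \<Rightarrow> nat \<Rightarrow> real" where
  "marginal_revenue V p g t = V * pmf p (g t)"

definition marginal_cost :: "real \<Rightarrow> 'a pmf \<Rightarrow> (nat \<Rightarrow> 'a) \<Rightarrow> nat \<Rightarrow> real" where
  "marginal_cost k p g t = k * (1 - (\<Sum>m<t. pmf p (g m)))"

definition adversary_guesses :: "real \<Rightarrow> real \<Rightarrow> 'a pmf \<Rightarrow> (nat \<Rightarrow> 'a) \<Rightarrow> 'a set" where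
  "adversary_guesses V k p g =
     {g t | t. \<forall>s\<le>t. marginal_revenue V p g s \<ge> marginal_cost k p g s}"

definition num_cracked :: "real \<Rightarrow> real \<Rightarrow> 'a pmf \<Rightarrow> (nat \<Rightarrow> 'a) \<Rightarrow> nat \<Rightarrow> (nat \<Rightarrow> 'a) \<Rightarrow> nat" where
  "num_cracked V k p g N \<omega> = card {n\<in>{..<N}. \<omega> n \<in> adversary_guesses V k p g}"

definition freq :: "nat \<Rightarrow> (nat \<Rightarrow> 'a) \<Rightarrow> 'a \<Rightarrow> nat" where
  "freq N \<omega> x = card {n\<in>{..<N}. \<omega> n = x}"

definition heavy_sum :: "nat \<Rightarrow> nat \<Rightarrow> (nat \<Rightarrow> 'a) \<Rightarrow> nat" where
  "heavy_sum N j \<omega> = (\<Sum>x\<in>{x \<in> \<omega> ` {..<N}. freq N \<omega> x \<ge> j}. freq N \<omega> x)"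

definition sample_pmf :: "nat \<Rightarrow> 'a pmf \<Rightarrow> (nat \<Rightarrow> 'a) pmf" where
  "sample_pmf N p = Pi_pmf {..<N} undefined (\<lambda>_. p)"

end

theory Submission
  imports Defs
begin

lemma prob_FS:
  fixes p :: "'a pmf"
  assumes n: "n < N" and S: "S \<subseteq> {..<N} - {n}" and tau: "\<tau> \<ge> 0"
  shows "measure_pmf.prob (sample_pmf N p) {\<omega>. pmf p (\<omega> n) < \<tau> \<and> (\<forall>m\<in>S. \<omega> m = \<omega> n)} \<le> \<tau> ^ card S"
proof -
  define A where "A = {..<N} - {n}"
  define Q where "Q = Pi_pmf A undefined (\<lambda>_. p)"
  define E where "E = {\<omega>. pmf p (\<omega> n) < \<tau> \<and> (\<forall>m\<in>S. \<omega> m = \<omega> n)}"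
  have finA: "finite A" "n \<notin> A" by (auto simp: A_def)
  have ins: "{..<N} = insert n A" using n by (auto simp: A_def)
  have SA: "S \<subseteq> A" using S by (simp add: A_def)
  have samp: "sample_pmf N p = do {y \<leftarrow> p; f \<leftarrow> Q; return_pmf (f(n := y))}"
    unfolding sample_pmf_def ins Q_def by (rule Pi_pmf_insert'[OF finA])
  have inner: "(\<integral>\<^sup>+f. indicator E (f(n := y)) \<partial>Q) \<le> ennreal (\<tau> ^ card S)" for y
  proof (cases "pmf p y < \<tau>")
    case True
    have "(\<integral>\<^sup>+f. indicator E (f(n := y)) \<partial>Q) = (\<integral>\<^sup>+f. indicator (Pi A (\<lambda>m. if m \<in> S then {y} else UNIV)) f \<partial>Q)"
      apply (rule nn_integral_cong)
      using True SA finA by (auto simp: E_def indicator_def Pi_def)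
    also have "\<dots> = emeasure Q (Pi A (\<lambda>m. if m \<in> S then {y} else UNIV))"
      by simp
    also have "\<dots> = ennreal (measure_pmf.prob Q (Pi A (\<lambda>m. if m \<in> S then {y} else UNIV)))"
      by (simp add: measure_pmf.emeasure_eq_measure)
    finally have eq: "(\<integral>\<^sup>+f. indicator E (f(n := y)) \<partial>Q) = ennreal (measure_pmf.prob Q (Pi A (\<lambda>m. if m \<in> S then {y} else UNIV)))" .
    have "measure_pmf.prob Q (Pi A (\<lambda>m. if m \<in> S then {y} else UNIV)) = (\<Prod>m\<in>A. measure_pmf.prob p (if m \<in> S then {y} else UNIV))"
      unfolding Q_def by (rule measure_Pi_pmf_Pi[OF finA(1)])
    also have "\<dots> = (\<Prod>m\<in>A. if m \<in> S then pmf p y else 1)"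
      by (intro prod.cong) (auto simp: measure_pmf_single)
    also have "\<dots> = pmf p y ^ card S"
      using SA finA by (simp add: prod.If_cases Int_absorb1)
    also have "\<dots> \<le> \<tau> ^ card S"
      using True by (intro power_mono) auto
    finally show ?thesis unfolding eq by (rule ennreal_leI)
  next
    case False
    have "(\<integral>\<^sup>+f. indicator E (f(n := y)) \<partial>Q) = (\<integral>\<^sup>+f. 0 \<partial>Q)"
      apply (rule nn_integral_cong)
      using False by (auto simp: E_def indicator_def)
    then show ?thesis by simp
  qed
  have "emeasure (measure_pmf (sample_pmf N p)) E = (\<integral>\<^sup>+y. (\<integral>\<^sup>+f. indicator E (f(n := y)) \<partial>Q) \<partial>p)"
    unfolding samp by (simp add: indicator_def)
  also have "\<dots> \<le> (\<integral>\<^sup>+y. ennreal (\<tau> ^ card S) \<partial>p)"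
    by (intro nn_integral_mono inner)
  also have "\<dots> = ennreal (\<tau> ^ card S)"
    by (simp add: measure_pmf.emeasure_space_1)
  finally have "emeasure (measure_pmf (sample_pmf N p)) E \<le> ennreal (\<tau> ^ card S)" .
  then show ?thesis
    unfolding E_def[symmetric] using tau
    by (simp add: measure_pmf.emeasure_eq_measure)
qed

lemma prob_En:
  fixes p :: "'a pmf"
  assumes n: "n < N" and L: "L > 0" and j: "j \<ge> 1"
  shows "measure_pmf.prob (sample_pmf N p) {\<omega>. freq N \<omega> (\<omega> n) \<ge> j \<and> pmf p (\<omega> n) < 1 / (real N * L)}
           \<le> 1 / (fact (j - 1) * L ^ (j - 1))"
proof -
  define \<tau> where "\<tau> = 1 / (real N * L)"
  define B where "B = {..<N} - {n}"
  define Ss where "Ss = {S. S \<subseteq> B \<and> card S = j - 1}"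
  define F where "F = (\<lambda>S. {\<omega>. pmf p (\<omega> n) < \<tau> \<and> (\<forall>m\<in>S. \<omega> m = \<omega> n)})"
  have Npos: "real N > 0" using n by simp
  have tau: "\<tau> \<ge> 0" using Npos L by (simp add: \<tau>_def)
  have finB: "finite B" by (simp add: B_def)
  have finSs: "finite Ss" unfolding Ss_def using finB by (auto intro: finite_subset[of _ "Pow B"])
  have cardB: "card B = N - 1" using n by (simp add: B_def)
  have sub: "{\<omega>. freq N \<omega> (\<omega> n) \<ge> j \<and> pmf p (\<omega> n) < 1 / (real N * L)} \<subseteq> (\<Union>S\<in>Ss. F S)"
  proof
    fix \<omega> assume "\<omega> \<in> {\<omega>. freq N \<omega> (\<omega> n) \<ge> j \<and> pmf p (\<omega> n) < 1 / (real N * L)}"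
    then have h1: "card {m\<in>{..<N}. \<omega> m = \<omega> n} \<ge> j" and h2: "pmf p (\<omega> n) < \<tau>"
      by (auto simp: freq_def \<tau>_def)
    define C where "C = {m\<in>{..<N}. \<omega> m = \<omega> n} - {n}"
    have "card C \<ge> j - 1" using h1 n unfolding C_def by (subst card_Diff_singleton) auto
    then obtain S where S: "S \<subseteq> C" "card S = j - 1"
      by (meson obtain_subset_with_card_n)
    have "S \<in> Ss" using S by (auto simp: Ss_def C_def B_def)
    moreover have "\<omega> \<in> F S" using S h2 by (auto simp: F_def C_def)
    ultimately show "\<omega> \<in> (\<Union>S\<in>Ss. F S)" by blast
  qed
  have "measure_pmf.prob (sample_pmf N p) {\<omega>. freq N \<omega> (\<omega> n) \<ge> j \<and> pmf p (\<omega> n) < 1 / (real N * L)}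
        \<le> measure_pmf.prob (sample_pmf N p) (\<Union>S\<in>Ss. F S)"
    by (rule measure_pmf.finite_measure_mono[OF sub]) simp
  also have "\<dots> \<le> (\<Sum>S\<in>Ss. measure_pmf.prob (sample_pmf N p) (F S))"
    by (rule measure_pmf.finite_measure_subadditive_finite[OF finSs]) simp
  also have "\<dots> \<le> (\<Sum>S\<in>Ss. \<tau> ^ (j - 1))"
  proof (rule sum_mono)
    fix S assume "S \<in> Ss"
    then have "S \<subseteq> {..<N} - {n}" "card S = j - 1" by (auto simp: Ss_def B_def)
    then show "measure_pmf.prob (sample_pmf N p) (F S) \<le> \<tau> ^ (j - 1)"
      using prob_FS[OF n _ tau, of S p] by (simp add: F_def)
  qed
  also have "\<dots> = real ((N - 1) choose (j - 1)) * \<tau> ^ (j - 1)"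
    using n_subsets[OF finB, of "j - 1"] cardB by (simp add: Ss_def)
  also have "\<dots> \<le> (real N ^ (j - 1) / fact (j - 1)) * \<tau> ^ (j - 1)"
  proof (rule mult_right_mono[OF _ zero_le_power[OF tau]])
    have "((N - 1) choose (j - 1)) * fact (j - 1) \<le> (N - 1) ^ (j - 1)" by (rule binomial_fact_pow)
    also have "\<dots> \<le> N ^ (j - 1)" by (intro power_mono) auto
    finally have "real ((N - 1) choose (j - 1)) * fact (j - 1) \<le> real N ^ (j - 1)"
      by (metis of_nat_fact of_nat_le_iff of_nat_mult of_nat_power)
    then show "real ((N - 1) choose (j - 1)) \<le> real N ^ (j - 1) / fact (j - 1)"
      by (simp add: field_simps)
  qed
  also have "\<dots> = 1 / (fact (j - 1) * L ^ (j - 1))"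
    using Npos L by (simp add: \<tau>_def power_divide power_mult_distrib field_simps)
  finally show ?thesis .
qed

lemma heavy_sum_card:
  "heavy_sum N j \<omega> = card {n\<in>{..<N}. freq N \<omega> (\<omega> n) \<ge> j}"
proof -
  define X where "X = {x \<in> \<omega> ` {..<N}. freq N \<omega> x \<ge> j}"
  have eq: "{n\<in>{..<N}. freq N \<omega> (\<omega> n) \<ge> j} = (\<Union>x\<in>X. {n\<in>{..<N}. \<omega> n = x})"
    by (auto simp: X_def)
  have c: "card (\<Union>x\<in>X. {n\<in>{..<N}. \<omega> n = x}) = (\<Sum>x\<in>X. card {n\<in>{..<N}. \<omega> n = x})"
    by (rule card_UN_disjoint) (auto simp: X_def)
  have "heavy_sum N j \<omega> = (\<Sum>x\<in>X. card {n\<in>{..<N}. \<omega> n = x})"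
    by (simp add: heavy_sum_def freq_def X_def)
  then show ?thesis using c eq by simp
qed

lemma cracked:
  assumes order_covers: "set_pmf p \<subseteq> range g"
    and order_decr: "\<And>s t. s \<le> t \<Longrightarrow> pmf p (g t) \<le> pmf p (g s)"
    and k_pos: "k > 0" and L_pos: "L > 0" and N: "N > 0"
    and ratio: "V / k \<ge> real N * L"
    and x: "pmf p x \<ge> 1 / (real N * L)"
  shows "x \<in> adversary_guesses V k p g"
proof -
  have NL: "real N * L > 0" using N L_pos by simp
  have "pmf p x > 0" using x NL by (smt (verit) divide_pos_pos)
  then have "x \<in> set_pmf p" by (simp add: set_pmf_eq)
  then obtain t where t: "x = g t" using order_covers by blast
  have "marginal_revenue V p g s \<ge> marginal_cost k p g s" if "s \<le> t" for s
  proof -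
    have q: "pmf p (g s) \<ge> 1 / (real N * L)" using order_decr[OF that] x t by simp
    have Vk: "V \<ge> k * (real N * L)" using ratio k_pos by (simp add: field_simps)
    have "k * (1 - (\<Sum>m<s. pmf p (g m))) \<le> k"
      using k_pos by (simp add: sum_nonneg)
    also have "k = k * (real N * L) * (1 / (real N * L))" using N L_pos by simp
    also have "\<dots> \<le> V * pmf p (g s)"
    proof -
      have "0 \<le> V" using Vk mult_pos_pos[OF k_pos NL] by linarith
      then show ?thesis using Vk q NL k_pos by (intro mult_mono) auto
    qed
    finally show ?thesis by (simp add: marginal_revenue_def marginal_cost_def)
  qed
  then show ?thesis unfolding adversary_guesses_def using t by blast
qed

lemma card_filter_lt: "card {n\<in>{..<N}. P n} \<le> (N::nat)"
  using card_mono[of "{..<N}" "{n\<in>{..<N}. P n}"] by auto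

theorem theorem2:
  fixes p :: "'a pmf" and g :: "nat \<Rightarrow> 'a"
    and N j :: nat and k V L :: real
  assumes order_inj: "inj g"
    and order_covers: "set_pmf p \<subseteq> range g"
    and order_decr: "\<And>s t. s \<le> t \<Longrightarrow> pmf p (g t) \<le> pmf p (g s)"
    and k_pos: "k > 0" and V_pos: "V > 0" and L_pos: "L > 0"
    and j_ge: "j \<ge> 1"
    and ratio: "V / k \<ge> real N * L"
  shows "measure_pmf.expectation (sample_pmf N p) (\<lambda>\<omega>. real (num_cracked V k p g N \<omega>))
         \<ge> measure_pmf.expectation (sample_pmf N p) (\<lambda>\<omega>. real (heavy_sum N j \<omega>))
           - real N / (fact (j - 1) * L ^ (j - 1))"
proof (cases "N = 0")
  case True
  then show ?thesis by (simp add: num_cracked_def heavy_sum_def)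
next
  case False
  then have N: "N > 0" by simp
  define M where "M = sample_pmf N p"
  define E where "E = (\<lambda>n. {\<omega>. freq N \<omega> (\<omega> n) \<ge> j \<and> pmf p (\<omega> n) < 1 / (real N * L)})"
  define \<rho> where "\<rho> = 1 / (fact (j - 1) * L ^ (j - 1))"
  have pw: "real (heavy_sum N j \<omega>) \<le> real (num_cracked V k p g N \<omega>) + (\<Sum>n<N. indicator (E n) \<omega>)" for \<omega>
  proof -
    define H where "H = {n\<in>{..<N}. freq N \<omega> (\<omega> n) \<ge> j}"
    define C1 where "C1 = {n\<in>{..<N}. \<omega> n \<in> adversary_guesses V k p g}"
    define C2 where "C2 = {n\<in>{..<N}. \<omega> \<in> E n}"
    have "H \<subseteq> C1 \<union> C2"
    proof
      fix n assume "n \<in> H"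
      then show "n \<in> C1 \<union> C2"
        using cracked[OF order_covers order_decr k_pos L_pos N ratio, of "\<omega> n"]
        by (cases "pmf p (\<omega> n) \<ge> 1 / (real N * L)") (auto simp: H_def C1_def C2_def E_def)
    qed
    then have "card H \<le> card (C1 \<union> C2)" by (intro card_mono) (auto simp: C1_def C2_def)
    also have "\<dots> \<le> card C1 + card C2" by (rule card_Un_le)
    finally have "real (card H) \<le> real (card C1) + real (card C2)" by linarith
    moreover have "real (card C2) = (\<Sum>n<N. indicator (E n) \<omega>)"
    proof -
      have "{..<N} \<inter> {n. \<omega> \<in> E n} = C2" by (auto simp: C2_def)
      then show ?thesis by (simp add: indicator_def sum.If_cases)
    qed
    ultimately show ?thesis
      by (simp add: heavy_sum_card num_cracked_def H_def C1_def)
  qed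
  have int_nc: "integrable M (\<lambda>\<omega>. real (num_cracked V k p g N \<omega>))"
  proof (rule measure_pmf.integrable_const_bound[where B = "real N"])
    show "AE \<omega> in M. norm (real (num_cracked V k p g N \<omega>)) \<le> real N"
    proof (intro AE_I2)
      fix \<omega> have "num_cracked V k p g N \<omega> \<le> N" unfolding num_cracked_def by (rule card_filter_lt)
      then show "norm (real (num_cracked V k p g N \<omega>)) \<le> real N" by simp
    qed
  qed simp
  have int_h: "integrable M (\<lambda>\<omega>. real (heavy_sum N j \<omega>))"
  proof (rule measure_pmf.integrable_const_bound[where B = "real N"])
    show "AE \<omega> in M. norm (real (heavy_sum N j \<omega>)) \<le> real N"
    proof (intro AE_I2)
      fix \<omega> have "heavy_sum N j \<omega> \<le> N" unfolding heavy_sum_card by (rule card_filter_lt)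
      then show "norm (real (heavy_sum N j \<omega>)) \<le> real N" by simp
    qed
  qed simp
  have int_i: "integrable M (\<lambda>\<omega>. indicator (E n) \<omega> :: real)" for n
    by (rule measure_pmf.integrable_const_bound[where B = 1]) (auto simp: indicator_def)
  have "measure_pmf.expectation M (\<lambda>\<omega>. real (heavy_sum N j \<omega>))
        \<le> measure_pmf.expectation M (\<lambda>\<omega>. real (num_cracked V k p g N \<omega>) + (\<Sum>n<N. indicator (E n) \<omega>))"
    by (intro integral_mono int_h Bochner_Integration.integrable_add int_nc
        Bochner_Integration.integrable_sum int_i pw)
  also have "\<dots> = measure_pmf.expectation M (\<lambda>\<omega>. real (num_cracked V k p g N \<omega>))
                 + (\<Sum>n<N. measure_pmf.prob M (E n))"
    by (subst Bochner_Integration.integral_add[OF int_nc Bochner_Integration.integrable_sum[OF int_i]],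
        subst Bochner_Integration.integral_sum[OF int_i]) simp
  also have "(\<Sum>n<N. measure_pmf.prob M (E n)) \<le> (\<Sum>n<N. \<rho>)"
  proof (rule sum_mono)
    fix n assume "n \<in> {..<N}"
    then have "n < N" by simp
    from prob_En[OF this L_pos j_ge, of p] show "measure_pmf.prob M (E n) \<le> \<rho>"
      by (simp add: M_def E_def \<rho>_def)
  qed
  also have "(\<Sum>n<N. \<rho>) = real N / (fact (j - 1) * L ^ (j - 1))"
    by (simp add: \<rho>_def)
  finally show ?thesis unfolding M_def by simp
qed

end
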